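(* Let $M=I\times F$ with the metric $g=-dt^2+f(t)^2g_F$, where $I\subset\mathbb{R}$ is an open interval, $f:I\to(0,\infty)$ is smooth and $(F,g_F)$ is a Riemannian manifold with $l=\dim F>1$, and let $\overline\nabla$ be the semi-symmetric metric connection determined by $P=\frac{\partial}{\partial t}$. Then $(M,\overline\nabla)$ is Einstein with Einstein constant $\lambda$ if and only if $\lambda=0$, $f(t)=c_1e^t+c_2$ for some constants $c_1,c_2$, and $(F,\nabla^F)$ is Einstein with Einstein constant $(l-1)c_2^2$.
   Context: $\nabla$ is the Levi-Civita connection of $g$, $\pi(X)=g(X,P)$, and $\overline\nabla_XY=\nabla_XY+\pi(Y)X-g(X,Y)P$. Conventions: $\overline R(X,Y)Z=\overline\nabla_X\overline\nabla_YZ-\overline\nabla_Y\overline\nabla_XZ-\overline\nabla_{[X,Y]}Z$, $\overline{\mathrm{Ric}}(X,Y)=\sum_k\varepsilon_kg(\overline R(X,E_k)Y,E_k)$ for a local orthonormal frame $(E_k)$, $\varepsilon_k=g(E_k,E_k)$; Einstein with constant $\lambda$ means $\overline{\mathrm{Ric}}=\lambda g$. For the Levi-Civita connection $\nabla^F$ of $g_F$ the same conventions are used, and $(F,\nabla^F)$ Einstein with constant $\lambda_F$ means $\mathrm{Ric}^F=\lambda_Fg_F$. *)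

theory Defs
  imports "HOL-Analysis.Analysis"
begin

definition pd :: "(real^'m \<Rightarrow> real) \<Rightarrow> 'm \<Rightarrow> real^'m \<Rightarrow> real" where
  "pd \<phi> i x = deriv (\<lambda>s. \<phi> (x + s *\<^sub>R axis i 1)) 0"

inductive_set iter_partials :: "(real^'m \<Rightarrow> real) \<Rightarrow> (real^'m \<Rightarrow> real) set"
  for \<phi> where
  base: "\<phi> \<in> iter_partials \<phi>"
| step: "\<psi> \<in> iter_partials \<phi> \<Longrightarrow> pd \<psi> i \<in> iter_partials \<phi>"

definition smooth_on_coord :: "(real^'m) set \<Rightarrow> (real^'m \<Rightarrow> real) \<Rightarrow> bool" where
  "smooth_on_coord W \<phi> \<longleftrightarrow>
     (\<forall>\<psi> \<in> iter_partials \<phi>. continuous_on W \<psi> \<and>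
        (\<forall>x\<in>W. \<forall>i. (\<lambda>s. \<psi> (x + s *\<^sub>R axis i 1)) differentiable (at 0)))"

definition smooth_on_real :: "real set \<Rightarrow> (real \<Rightarrow> real) \<Rightarrow> bool" where
  "smooth_on_real I f \<longleftrightarrow> (\<forall>n. \<forall>t\<in>I. ((deriv ^^ n) f) differentiable (at t))"

definition semi_riem_metric :: "(real^'m) set \<Rightarrow> (real^'m \<Rightarrow> real^'m^'m) \<Rightarrow> bool" where
  "semi_riem_metric W G \<longleftrightarrow> open W \<and>
     (\<forall>i j. smooth_on_coord W (\<lambda>x. G x $ i $ j)) \<and>
     (\<forall>x\<in>W. transpose (G x) = G x \<and> invertible (G x))"

definition riem_metric :: "(real^'m) set \<Rightarrow> (real^'m \<Rightarrow> real^'m^'m) \<Rightarrow> bool" where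
  "riem_metric W G \<longleftrightarrow> semi_riem_metric W G \<and>
     (\<forall>x\<in>W. \<forall>v. v \<noteq> 0 \<longrightarrow> v \<bullet> (G x *v v) > 0)"

text \<open>Christoffel symbols of the Levi-Civita connection:
  nabla_{d_i} d_j = sum_k christoffel G x k i j d_k.\<close>
definition christoffel :: "(real^'m \<Rightarrow> real^'m^'m) \<Rightarrow> real^'m \<Rightarrow> 'm \<Rightarrow> 'm \<Rightarrow> 'm \<Rightarrow> real" where
  "christoffel G x k i j =
     (\<Sum>l\<in>UNIV. matrix_inv (G x) $ k $ l *
        (pd (\<lambda>y. G y $ j $ l) i x + pd (\<lambda>y. G y $ i $ l) j x - pd (\<lambda>y. G y $ i $ j) l x)) / 2"

text \<open>Connection coefficients of the semi-symmetric metric connection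
  nablabar_X Y = nabla_X Y + pi(Y) X - g(X,Y) P, with pi(X) = g(X,P).\<close>
definition ssm_coeff :: "(real^'m \<Rightarrow> real^'m^'m) \<Rightarrow> (real^'m \<Rightarrow> real^'m)
     \<Rightarrow> real^'m \<Rightarrow> 'm \<Rightarrow> 'm \<Rightarrow> 'm \<Rightarrow> real" where
  "ssm_coeff G P x k i j =
     christoffel G x k i j
     + (\<Sum>l\<in>UNIV. G x $ j $ l * P x $ l) * (if k = i then 1 else 0)
     - G x $ i $ j * P x $ k"

text \<open>Curvature components of a connection with coefficients Gam
  (nabla_{d_i} d_j = sum_k Gam x k i j d_k), with the convention
  R(X,Y)Z = nabla_X nabla_Y Z - nabla_Y nabla_X Z - nabla_[X,Y] Z:
  R(d_i,d_j) d_k = sum_l curv Gam x l i j k d_l.\<close>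
definition curv :: "(real^'m \<Rightarrow> 'm \<Rightarrow> 'm \<Rightarrow> 'm \<Rightarrow> real)
     \<Rightarrow> real^'m \<Rightarrow> 'm \<Rightarrow> 'm \<Rightarrow> 'm \<Rightarrow> 'm \<Rightarrow> real" where
  "curv Gam x l i j k =
     pd (\<lambda>y. Gam y l j k) i x - pd (\<lambda>y. Gam y l i k) j x
     + (\<Sum>m\<in>UNIV. Gam x m j k * Gam x l i m - Gam x m i k * Gam x l j m)"

text \<open>Ricci tensor Ric(X,Y) = sum_k eps_k g(R(X,E_k)Y,E_k), written in the
  frame-independent coordinate form sum_{a,b} g^{ab} g(R(X,d_a)Y,d_b);
  component (i,k) means X = d_i, Y = d_k.\<close>
definition ricci :: "(real^'m \<Rightarrow> real^'m^'m) \<Rightarrow> (real^'m \<Rightarrow> 'm \<Rightarrow> 'm \<Rightarrow> 'm \<Rightarrow> real)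
     \<Rightarrow> real^'m \<Rightarrow> 'm \<Rightarrow> 'm \<Rightarrow> real" where
  "ricci G Gam x i k =
     (\<Sum>a\<in>UNIV. \<Sum>b\<in>UNIV. matrix_inv (G x) $ a $ b *
        (\<Sum>l\<in>UNIV. curv Gam x l i a k * G x $ l $ b))"

definition einstein :: "(real^'m) set \<Rightarrow> (real^'m \<Rightarrow> real^'m^'m)
     \<Rightarrow> (real^'m \<Rightarrow> 'm \<Rightarrow> 'm \<Rightarrow> 'm \<Rightarrow> real) \<Rightarrow> real \<Rightarrow> bool" where
  "einstein W G Gam lam \<longleftrightarrow> (\<forall>x\<in>W. \<forall>i k. ricci G Gam x i k = lam * G x $ i $ k)"

text \<open>Coordinates on M are indexed by unit + 'n: Inl () is t, Inr i is x_i.\<close>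
definition tcoord :: "real^(unit + 'n::finite) \<Rightarrow> real" where
  "tcoord p = p $ Inl ()"

definition xcoord :: "real^(unit + 'n::finite) \<Rightarrow> real^'n" where
  "xcoord p = (\<chi> i. p $ Inr i)"

definition wp_domain :: "real set \<Rightarrow> (real^'n) set \<Rightarrow> (real^(unit + 'n::finite)) set" where
  "wp_domain I U = {p. tcoord p \<in> I \<and> xcoord p \<in> U}"

definition wp_metric :: "(real \<Rightarrow> real) \<Rightarrow> (real^'n \<Rightarrow> real^'n^'n)
     \<Rightarrow> real^(unit + 'n::finite) \<Rightarrow> real^(unit + 'n)^(unit + 'n)" where
  "wp_metric f GF p = (\<chi> a b. case (a, b) of
      (Inl _, Inl _) \<Rightarrow> -1
    | (Inr i, Inr j) \<Rightarrow> (f (tcoord p))^2 * GF (xcoord p) $ i $ j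
    | _ \<Rightarrow> 0)"

definition dt_field :: "real^(unit + 'n::finite) \<Rightarrow> real^(unit + 'n)" where
  "dt_field p = (\<chi> a. case a of Inl _ \<Rightarrow> 1 | Inr _ \<Rightarrow> 0)"

end

theory Submission
  imports Defs
begin


lemma sum_UNIV_plus:
  "(\<Sum>a\<in>(UNIV::(unit+'n::finite) set). g a) = g (Inl ()) + (\<Sum>i\<in>UNIV. g (Inr i))"
proof -
  have "(\<Sum>a\<in>(UNIV::(unit+'n::finite) set). g a) = (\<Sum>a\<in>(UNIV <+> UNIV). g a)" by simp
  also have "\<dots> = sum (g \<circ> Inl) (UNIV::unit set) + sum (g \<circ> Inr) UNIV"
    by (rule sum.Plus) auto
  finally show ?thesis by (simp add: UNIV_unit)
qed

lemma ev_line: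
  fixes x :: "'a::real_normed_vector"
  assumes "open S" "x \<in> S"
  shows "eventually (\<lambda>s::real. x + s *\<^sub>R v \<in> S) (nhds 0)"
proof -
  have "((\<lambda>s::real. x + s *\<^sub>R v) \<longlongrightarrow> x + 0 *\<^sub>R v) (nhds 0)"
    by (intro tendsto_intros filterlim_ident)
  then show ?thesis using assms by (simp add: topological_tendstoD)
qed

lemma pd_cong:
  assumes "open S" "x \<in> S" "\<forall>y\<in>S. \<phi> y = \<psi> y"
  shows "pd \<phi> i x = pd \<psi> i x"
  unfolding pd_def
  apply (rule deriv_cong_ev[OF _ refl])
  using ev_line[OF assms(1,2), of "axis i 1"] assms(3) by (auto elim: eventually_mono)

lemma matrix_inv_props:
  assumes "invertible A"
  shows "A ** matrix_inv A = mat 1 \<and> matrix_inv A ** A = mat 1"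
  using assms unfolding invertible_def matrix_inv_def by (rule someI_ex)

lemma matrix_inv_unique:
  fixes A :: "'a::comm_semiring_1^'n^'n"
  assumes "A ** B = mat 1" "B ** A = mat 1"
  shows "matrix_inv A = B"
proof -
  have inv: "invertible A" using assms unfolding invertible_def by blast
  let ?C = "matrix_inv A"
  have "?C = ?C ** (A ** B)" using assms by (simp add: matrix_mul_rid)
  also have "\<dots> = (?C ** A) ** B" by (simp add: matrix_mul_assoc)
  also have "\<dots> = B" using matrix_inv_props[OF inv] by (simp add: matrix_mul_lid)
  finally show ?thesis .
qed

lemma ricci_trace:
  assumes sym: "transpose (G x) = G x" and inv: "invertible (G x)"
  shows "ricci G Gam x i k = (\<Sum>a\<in>UNIV. curv Gam x a i a k)"
proof -
  have symm: "G x $ l $ b = G x $ b $ l" for l b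
    using sym by (metis transpose_def vec_lambda_beta)
  have ig: "(\<Sum>b\<in>UNIV. matrix_inv (G x) $ a $ b * G x $ b $ l) = (if a = l then 1 else 0)" for a l
  proof -
    have "(matrix_inv (G x) ** G x) $ a $ l = (if a = l then 1 else 0)"
      using matrix_inv_props[OF inv] by (simp add: mat_def)
    then show ?thesis by (simp add: matrix_matrix_mult_def)
  qed
  have "(\<Sum>b\<in>UNIV. matrix_inv (G x) $ a $ b * (\<Sum>l\<in>UNIV. curv Gam x l i a k * G x $ l $ b))
        = curv Gam x a i a k" for a
  proof -
    have "(\<Sum>b\<in>UNIV. matrix_inv (G x) $ a $ b * (\<Sum>l\<in>UNIV. curv Gam x l i a k * G x $ l $ b))
        = (\<Sum>b\<in>UNIV. \<Sum>l\<in>UNIV. curv Gam x l i a k * (matrix_inv (G x) $ a $ b * G x $ b $ l))"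
      by (simp add: sum_distrib_left symm mult_ac)
    also have "\<dots> = (\<Sum>l\<in>UNIV. curv Gam x l i a k * (\<Sum>b\<in>UNIV. matrix_inv (G x) $ a $ b * G x $ b $ l))"
      by (subst sum.swap) (simp add: sum_distrib_left)
    also have "\<dots> = curv Gam x a i a k" by (simp add: ig if_distrib sum.delta sum.delta' cong: if_cong)
    finally show ?thesis .
  qed
  then show ?thesis unfolding ricci_def by simp
qed

lemma curv_same: "curv Gam x l i i k = 0"
  unfolding curv_def by simp

lemma t_line: "tcoord (p + s *\<^sub>R axis (Inl ()) 1) = tcoord p + s"
  by (simp add: tcoord_def axis_def)
lemma x_tline: "xcoord (p + s *\<^sub>R axis (Inl ()) 1) = xcoord p"
  by (simp add: xcoord_def axis_def vec_eq_iff)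
lemma t_xline: "tcoord (p + s *\<^sub>R axis (Inr i) 1) = tcoord p"
  by (simp add: tcoord_def axis_def)
lemma x_xline: "xcoord (p + s *\<^sub>R axis (Inr i) 1) = xcoord p + s *\<^sub>R axis i 1"
  by (simp add: xcoord_def axis_def vec_eq_iff)

lemma pd_tfun_x: "pd (\<lambda>y. F (tcoord y)) (Inr i) p = 0"
  unfolding pd_def t_xline by simp
lemma pd_xfun_t: "pd (\<lambda>y. H (xcoord y)) (Inl ()) p = 0"
  unfolding pd_def x_tline by simp
lemma pd_xfun_x: "pd (\<lambda>y. H (xcoord y)) (Inr i) p = pd H i (xcoord p)"
  unfolding pd_def x_xline by simp
lemma pd_tfun_t:
  assumes "(F has_real_derivative D) (at (tcoord p))"
  shows "pd (\<lambda>y. F (tcoord y) * C (xcoord y)) (Inl ()) p = D * C (xcoord p)"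
proof -
  have "((\<lambda>s. F (s + tcoord p)) has_real_derivative D) (at 0)"
    using assms DERIV_shift[of F D 0 "tcoord p"] by simp
  then have "((\<lambda>s. F (tcoord p + s) * C (xcoord p)) has_real_derivative D * C (xcoord p)) (at 0)"
    by (auto intro!: derivative_eq_intros simp: add.commute)
  then show ?thesis unfolding pd_def t_line x_tline by (rule DERIV_imp_deriv)
qed




lemma sum_cases: "(a::unit+'n) = Inl () \<or> (\<exists>i. a = Inr i)"
  by (cases a) auto

lemma pd_const: "pd (\<lambda>y. c) i p = 0"
  unfolding pd_def by simp

lemma pd_tfun_t1:
  assumes "(F has_real_derivative D) (at (tcoord p))"
  shows "pd (\<lambda>y. F (tcoord y)) (Inl ()) p = D"
  using pd_tfun_t[OF assms, of "\<lambda>_. 1"] by simp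

lemma pd_tx_x:
  assumes "(\<lambda>s. H (xcoord p + s *\<^sub>R axis k 1)) differentiable (at 0)"
  shows "pd (\<lambda>y. F (tcoord y) * H (xcoord y)) (Inr k) p = F (tcoord p) * pd H k (xcoord p)"
proof -
  have "((\<lambda>s. H (xcoord p + s *\<^sub>R axis k 1)) has_real_derivative pd H k (xcoord p)) (at 0)"
    using assms unfolding pd_def by (simp add: DERIV_deriv_iff_real_differentiable)
  then have "((\<lambda>s. F (tcoord p) * H (xcoord p + s *\<^sub>R axis k 1)) has_real_derivative
      F (tcoord p) * pd H k (xcoord p)) (at 0)"
    by (rule DERIV_cmult)
  then show ?thesis unfolding pd_def t_xline x_xline by (rule DERIV_imp_deriv)
qed

definition mkpt :: "real \<Rightarrow> real^'n \<Rightarrow> real^(unit+'n::finite)" where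
  "mkpt t x = (\<chi> a. case a of Inl _ \<Rightarrow> t | Inr i \<Rightarrow> x $ i)"

lemma mkpt_coords[simp]: "tcoord (mkpt t x) = t" "xcoord (mkpt t x) = x"
  by (simp_all add: mkpt_def tcoord_def xcoord_def vec_eq_iff)

lemma wpG[simp]:
  "wp_metric f GF p $ Inl u $ Inl v = -1"
  "wp_metric f GF p $ Inl u $ Inr j = 0"
  "wp_metric f GF p $ Inr i $ Inl v = 0"
  "wp_metric f GF p $ Inr i $ Inr j = f (tcoord p) ^ 2 * GF (xcoord p) $ i $ j"
  by (simp_all add: wp_metric_def)

lemma dt_field_simps[simp]: "dt_field p $ Inl u = 1" "dt_field p $ Inr i = 0"
  by (simp_all add: dt_field_def)

definition Ginv :: "(real \<Rightarrow> real) \<Rightarrow> (real^'n \<Rightarrow> real^'n^'n)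
     \<Rightarrow> real^(unit + 'n::finite) \<Rightarrow> real^(unit + 'n)^(unit + 'n)" where
  "Ginv f GF p = (\<chi> a b. case (a, b) of
      (Inl _, Inl _) \<Rightarrow> -1
    | (Inr i, Inr j) \<Rightarrow> matrix_inv (GF (xcoord p)) $ i $ j / (f (tcoord p))^2
    | _ \<Rightarrow> 0)"

lemma GinvE[simp]:
  "Ginv f GF p $ Inl u $ Inl v = -1"
  "Ginv f GF p $ Inl u $ Inr j = 0"
  "Ginv f GF p $ Inr i $ Inl v = 0"
  "Ginv f GF p $ Inr i $ Inr j = matrix_inv (GF (xcoord p)) $ i $ j / (f (tcoord p))^2"
  by (simp_all add: Ginv_def)

locale wp =
  fixes I :: "real set" and f :: "real \<Rightarrow> real"
    and U :: "(real^'n::finite) set" and GF :: "real^'n \<Rightarrow> real^'n^'n"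
  assumes openI: "open I" and openU: "open U" and fpos: "\<forall>t\<in>I. f t > 0"
    and fd0: "\<forall>t\<in>I. f differentiable at t"
    and fd1: "\<forall>t\<in>I. deriv f differentiable at t"
    and hsym: "\<forall>x\<in>U. transpose (GF x) = GF x"
    and hinv: "\<forall>x\<in>U. invertible (GF x)"
    and hdiff: "\<forall>x\<in>U. \<forall>i j k. (\<lambda>s. GF (x + s *\<^sub>R axis k 1) $ i $ j) differentiable (at 0)"
begin

abbreviation "D \<equiv> wp_domain I U"
abbreviation "G \<equiv> wp_metric f GF"
abbreviation "f1 \<equiv> deriv f"
abbreviation "f2 \<equiv> deriv (deriv f)"

lemma D_iff: "p \<in> D \<longleftrightarrow> tcoord p \<in> I \<and> xcoord p \<in> U"
  by (simp add: wp_domain_def)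

lemma open_D: "open D"
proof -
  have "D = tcoord -` I \<inter> xcoord -` U" by (auto simp: wp_domain_def)
  moreover have "open (tcoord -` I :: (real^(unit+'n)) set)"
    unfolding tcoord_def by (rule open_vimage_vec_nth[OF openI])
  moreover have "open (xcoord -` U :: (real^(unit+'n)) set)"
  proof (rule continuous_open_vimage[OF openU])
    fix x :: "real^(unit+'n)"
    show "continuous (at x) xcoord" unfolding xcoord_def isCont_def
      by (rule tendsto_vec_lambda) (auto intro!: tendsto_intros)
  qed
  ultimately show ?thesis by auto
qed

lemma hsymE: "x \<in> U \<Longrightarrow> GF x $ i $ j = GF x $ j $ i"
proof -
  assume x: "x \<in> U"
  have "transpose (GF x) $ i $ j = GF x $ i $ j" using hsym x by simp
  then have t: "GF x $ j $ i = GF x $ i $ j" by (simp add: transpose_def)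
  show ?thesis by (rule sym[OF t])
qed

lemma hinvE:
  assumes "x \<in> U"
  shows "(\<Sum>l\<in>UNIV. matrix_inv (GF x) $ k $ l * GF x $ l $ j) = (if k = j then 1 else 0)"
    "(\<Sum>l\<in>UNIV. GF x $ k $ l * matrix_inv (GF x) $ l $ j) = (if k = j then 1 else 0)"
proof -
  have "(matrix_inv (GF x) ** GF x) $ k $ j = (if k = j then 1 else 0)"
       "(GF x ** matrix_inv (GF x)) $ k $ j = (if k = j then 1 else 0)"
    using matrix_inv_props[OF hinv[rule_format, OF assms]] by (simp_all add: mat_def)
  then show "(\<Sum>l\<in>UNIV. matrix_inv (GF x) $ k $ l * GF x $ l $ j) = (if k = j then 1 else 0)"
    "(\<Sum>l\<in>UNIV. GF x $ k $ l * matrix_inv (GF x) $ l $ j) = (if k = j then 1 else 0)"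
    by (simp_all add: matrix_matrix_mult_def)
qed

lemma fpos': "p \<in> D \<Longrightarrow> f (tcoord p) > 0" using fpos by (simp add: D_iff)

lemma G_inv:
  assumes p: "p \<in> D"
  shows "G p ** Ginv f GF p = mat 1" "Ginv f GF p ** G p = mat 1"
proof -
  have x: "xcoord p \<in> U" using p by (simp add: D_iff)
  have fnz: "f (tcoord p) \<noteq> 0" using fpos'[OF p] by simp
  have e1: "(G p ** Ginv f GF p) $ Inl () $ Inl () = 1"
    by (simp add: matrix_matrix_mult_def sum_UNIV_plus)
  have e2: "(G p ** Ginv f GF p) $ Inl () $ Inr j = 0" for j
    by (simp add: matrix_matrix_mult_def sum_UNIV_plus)
  have e3: "(G p ** Ginv f GF p) $ Inr i $ Inl () = 0" for i
    by (simp add: matrix_matrix_mult_def sum_UNIV_plus)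
  have e4: "(G p ** Ginv f GF p) $ Inr i $ Inr j = (if i = j then 1 else 0)" for i j
  proof -
    have "(\<Sum>k\<in>UNIV. f (tcoord p)^2 * GF (xcoord p) $ i $ k * (matrix_inv (GF (xcoord p)) $ k $ j / f (tcoord p)^2))
       = (\<Sum>k\<in>UNIV. GF (xcoord p) $ i $ k * matrix_inv (GF (xcoord p)) $ k $ j)"
      using fnz by (intro sum.cong) auto
    then show ?thesis using hinvE(2)[OF x, of i j]
      by (simp add: matrix_matrix_mult_def sum_UNIV_plus)
  qed
  have ent: "(G p ** Ginv f GF p) $ a $ b = mat 1 $ a $ b" for a b
  proof -
    consider "a = Inl ()" "b = Inl ()" | j where "a = Inl ()" "b = Inr j"
      | i where "a = Inr i" "b = Inl ()" | i j where "a = Inr i" "b = Inr j"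
      using sum_cases[of a] sum_cases[of b] by blast
    then show ?thesis
      by cases (simp_all only: e1 e2 e3 e4 mat_def vec_lambda_beta, simp_all)
  qed
  show *: "G p ** Ginv f GF p = mat 1" unfolding vec_eq_iff using ent by blast
  from * show "Ginv f GF p ** G p = mat 1" using matrix_left_right_inverse by blast
qed

lemma matrix_inv_G: "p \<in> D \<Longrightarrow> matrix_inv (G p) = Ginv f GF p"
  using G_inv matrix_inv_unique by blast

lemma G_invertible: "p \<in> D \<Longrightarrow> invertible (G p)"
  using G_inv unfolding invertible_def by blast

lemma G_sym: "p \<in> D \<Longrightarrow> transpose (G p) = G p"
proof -
  assume p: "p \<in> D"
  have x: "xcoord p \<in> U" using p by (simp add: D_iff)
  have sy: "G p $ b $ a = G p $ a $ b" for a b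
  proof -
    consider "a = Inl ()" "b = Inl ()" | j where "a = Inl ()" "b = Inr j"
      | i where "a = Inr i" "b = Inl ()" | i j where "a = Inr i" "b = Inr j"
      using sum_cases[of a] sum_cases[of b] by blast
    then show ?thesis
    proof cases
      case (4 i j)
      then show ?thesis using hsymE[OF x, of i j] by (simp only: wpG)
    qed simp_all
  qed
  have tr: "transpose (G p) $ a $ b = G p $ a $ b" for a b
    by (simp add: transpose_def) (rule sy)
  show ?thesis unfolding vec_eq_iff using tr by blast
qed

end



context wp begin

lemma f_deriv: "t \<in> I \<Longrightarrow> (f has_real_derivative f1 t) (at t)"
  using fd0 by (simp add: DERIV_deriv_iff_real_differentiable)
lemma f1_deriv: "t \<in> I \<Longrightarrow> (f1 has_real_derivative f2 t) (at t)"
  using fd1 by (simp add: DERIV_deriv_iff_real_differentiable)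

lemma pdG_t:
  assumes p: "p \<in> D"
  shows "pd (\<lambda>y. f (tcoord y)^2 * GF (xcoord y) $ i $ j) (Inl ()) p
       = 2 * f (tcoord p) * f1 (tcoord p) * GF (xcoord p) $ i $ j"
proof -
  have t: "tcoord p \<in> I" using p by (simp add: D_iff)
  have "((\<lambda>s. f s ^ 2) has_real_derivative 2 * f (tcoord p) * f1 (tcoord p)) (at (tcoord p))"
    using f_deriv[OF t] by (auto intro!: derivative_eq_intros)
  from pd_tfun_t[where C = "\<lambda>z. GF z $ i $ j", OF this] show ?thesis by simp
qed

lemma pdG_x:
  assumes p: "p \<in> D"
  shows "pd (\<lambda>y. f (tcoord y)^2 * GF (xcoord y) $ i $ j) (Inr k) p
       = f (tcoord p)^2 * pd (\<lambda>z. GF z $ i $ j) k (xcoord p)"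
proof -
  have x: "xcoord p \<in> U" using p by (simp add: D_iff)
  from pd_tx_x[where F = "\<lambda>s. f s ^ 2" and H = "\<lambda>z. GF z $ i $ j", OF hdiff[rule_format, OF x]]
  show ?thesis by simp
qed

lemma chr:
  assumes p: "p \<in> D"
  defines "t \<equiv> tcoord p" and "x \<equiv> xcoord p"
  shows "christoffel G p (Inl ()) (Inl ()) (Inl ()) = 0"
    "christoffel G p (Inl ()) (Inl ()) (Inr j) = 0"
    "christoffel G p (Inl ()) (Inr i) (Inl ()) = 0"
    "christoffel G p (Inl ()) (Inr i) (Inr j) = f t * f1 t * GF x $ i $ j"
    "christoffel G p (Inr k) (Inl ()) (Inl ()) = 0"
    "christoffel G p (Inr k) (Inl ()) (Inr j) = (if k = j then f1 t / f t else 0)"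
    "christoffel G p (Inr k) (Inr i) (Inl ()) = (if k = i then f1 t / f t else 0)"
    "christoffel G p (Inr k) (Inr i) (Inr j) = christoffel GF x k i j"
proof -
  have xU: "x \<in> U" using p by (simp add: D_iff x_def)
  have fnz: "f t \<noteq> 0" using fpos'[OF p] by (simp add: t_def)
  note simps = christoffel_def matrix_inv_G[OF p] sum_UNIV_plus pdG_t[OF p] pdG_x[OF p] pd_const
     t_def[symmetric] x_def[symmetric]
  show "christoffel G p (Inl ()) (Inl ()) (Inl ()) = 0" by (simp add: simps)
  show "christoffel G p (Inl ()) (Inl ()) (Inr j) = 0" by (simp add: simps)
  show "christoffel G p (Inl ()) (Inr i) (Inl ()) = 0" by (simp add: simps)
  show "christoffel G p (Inl ()) (Inr i) (Inr j) = f t * f1 t * GF x $ i $ j" by (simp add: simps)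
  show "christoffel G p (Inr k) (Inl ()) (Inl ()) = 0" by (simp add: simps)
  have hs: "GF x $ a $ b = GF x $ b $ a" for a b using hsymE[OF xU] .
  have key: "(\<Sum>l\<in>UNIV. matrix_inv (GF x) $ k $ l / f t ^ 2 * (2 * f t * f1 t * GF x $ j $ l)) / 2
       = (if k = j then f1 t / f t else 0)" for j
  proof -
    have "(\<Sum>l\<in>UNIV. matrix_inv (GF x) $ k $ l / f t ^ 2 * (2 * f t * f1 t * GF x $ j $ l)) / 2
        = (f1 t / f t) * (\<Sum>l\<in>UNIV. matrix_inv (GF x) $ k $ l * GF x $ l $ j)"
      using fnz by (simp add: sum_distrib_left sum_divide_distrib hs[of j] power2_eq_square field_simps)
    then show ?thesis by (simp add: hinvE(1)[OF xU])
  qed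
  show "christoffel G p (Inr k) (Inl ()) (Inr j) = (if k = j then f1 t / f t else 0)"
    using key[of j] by (simp add: simps)
  show "christoffel G p (Inr k) (Inr i) (Inl ()) = (if k = i then f1 t / f t else 0)"
    using key[of i] by (simp add: simps)
  have "(\<Sum>l\<in>UNIV. matrix_inv (GF x) $ k $ l / f t ^ 2 *
          (f t ^ 2 * pd (\<lambda>z. GF z $ j $ l) i x + f t ^ 2 * pd (\<lambda>z. GF z $ i $ l) j x
           - f t ^ 2 * pd (\<lambda>z. GF z $ i $ j) l x))
      = (\<Sum>l\<in>UNIV. matrix_inv (GF x) $ k $ l *
          (pd (\<lambda>z. GF z $ j $ l) i x + pd (\<lambda>z. GF z $ i $ l) j x - pd (\<lambda>z. GF z $ i $ j) l x))"
    using fnz by (intro sum.cong) (simp_all add: field_simps)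
  then show "christoffel G p (Inr k) (Inr i) (Inr j) = christoffel GF x k i j"
    by (simp add: simps)
qed

end



definition Gb :: "(real \<Rightarrow> real) \<Rightarrow> (real^'n \<Rightarrow> real^'n^'n) \<Rightarrow> real^(unit+'n::finite)
    \<Rightarrow> (unit+'n) \<Rightarrow> (unit+'n) \<Rightarrow> (unit+'n) \<Rightarrow> real" where
 "Gb f GF p k i j = (case k of
   Inl _ \<Rightarrow> (case (i, j) of (Inr i', Inr j') \<Rightarrow>
        (f (tcoord p) * deriv f (tcoord p) - f (tcoord p)^2) * GF (xcoord p) $ i' $ j' | _ \<Rightarrow> 0)
 | Inr k' \<Rightarrow> (case (i, j) of (Inl _, Inl _) \<Rightarrow> 0
      | (Inl _, Inr j') \<Rightarrow> (if k' = j' then deriv f (tcoord p) / f (tcoord p) else 0)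
      | (Inr i', Inl _) \<Rightarrow> (if k' = i' then deriv f (tcoord p) / f (tcoord p) - 1 else 0)
      | (Inr i', Inr j') \<Rightarrow> christoffel GF (xcoord p) k' i' j'))"

lemma Gb_simps:
  "Gb f GF p (Inl u) (Inl v) (Inl w) = 0"
  "Gb f GF p (Inl u) (Inl v) (Inr j) = 0"
  "Gb f GF p (Inl u) (Inr i) (Inl w) = 0"
  "Gb f GF p (Inl u) (Inr i) (Inr j) = (f (tcoord p) * deriv f (tcoord p) - f (tcoord p)^2) * GF (xcoord p) $ i $ j"
  "Gb f GF p (Inr k) (Inl v) (Inl w) = 0"
  "Gb f GF p (Inr k) (Inl v) (Inr j) = (if k = j then deriv f (tcoord p) / f (tcoord p) else 0)"
  "Gb f GF p (Inr k) (Inr i) (Inl w) = (if k = i then deriv f (tcoord p) / f (tcoord p) - 1 else 0)"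
  "Gb f GF p (Inr k) (Inr i) (Inr j) = christoffel GF (xcoord p) k i j"
  by (simp_all add: Gb_def)

context wp begin

lemma ssm_eq:
  assumes p: "p \<in> D"
  shows "ssm_coeff G dt_field p k i j = Gb f GF p k i j"
proof -
  show ?thesis using sum_cases[of k] sum_cases[of i] sum_cases[of j]
    by (elim disjE exE) (simp_all add: ssm_coeff_def chr[OF p] sum_UNIV_plus Gb_simps algebra_simps power2_eq_square)
qed

lemma curv_eq:
  assumes p: "p \<in> D"
  shows "curv (ssm_coeff G dt_field) p l i j k = curv (Gb f GF) p l i j k"
proof -
  have e: "\<forall>y\<in>D. ssm_coeff G dt_field y a b c = Gb f GF y a b c" for a b c
    using ssm_eq by blast
  show ?thesis unfolding curv_def
    by (simp add: pd_cong[OF open_D p e] ssm_eq[OF p])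
qed

lemma ricci_wp:
  assumes p: "p \<in> D"
  shows "ricci G (ssm_coeff G dt_field) p i k = (\<Sum>a\<in>UNIV. curv (Gb f GF) p a i a k)"
  by (simp add: ricci_trace[of G p, OF G_sym[OF p] G_invertible[OF p]] curv_eq[OF p])

lemma ricci_F:
  assumes x: "x \<in> U"
  shows "ricci GF (christoffel GF) x i k = (\<Sum>a\<in>UNIV. curv (christoffel GF) x a i a k)"
  using ricci_trace hsym hinv x by blast

lemma chr_sym:
  assumes x: "x \<in> U"
  shows "christoffel GF x k i j = christoffel GF x k j i"
proof -
  have "pd (\<lambda>z. GF z $ i $ j) l x = pd (\<lambda>z. GF z $ j $ i) l x" for i j l
    by (rule pd_cong[OF openU x]) (auto intro: hsymE)
  then show ?thesis unfolding christoffel_def by (simp add: algebra_simps)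
qed

lemma pdGb:
  assumes p: "p \<in> D"
  defines "t \<equiv> tcoord p" and "x \<equiv> xcoord p"
  shows
   "pd (\<lambda>y. Gb f GF y (Inr A) (Inr B) (Inl ())) (Inl ()) p
      = (if A = B then (f2 t * f t - f1 t * f1 t) / (f t * f t) else 0)"
   "pd (\<lambda>y. Gb f GF y (Inl ()) (Inr I') (Inr K)) (Inl ()) p
      = (f1 t * f1 t + f t * f2 t - 2 * f t * f1 t) * GF x $ I' $ K"
   "pd (\<lambda>y. Gb f GF y (Inr A) (Inr B) (Inr K)) (Inr I') p = pd (\<lambda>z. christoffel GF z A B K) I' x"
   "pd (\<lambda>y. Gb f GF y (Inr A) (Inr B) (Inr K)) (Inl ()) p = 0"
   "pd (\<lambda>y. Gb f GF y (Inr A) (Inl ()) (Inr K)) (Inr I') p = 0"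
   "pd (\<lambda>y. Gb f GF y (Inr A) (Inr B) (Inl ())) (Inr I') p = 0"
   "pd (\<lambda>y. Gb f GF y (Inl ()) (Inl ()) c) d p = 0"
   "pd (\<lambda>y. Gb f GF y (Inl ()) (Inr B) (Inl ())) d p = 0"
   "pd (\<lambda>y. Gb f GF y (Inr A) (Inl ()) (Inl ())) d p = 0"
proof -
  have tI: "t \<in> I" using p by (simp add: D_iff t_def)
  have fnz: "f t \<noteq> 0" using fpos'[OF p] by (simp add: t_def)
  show "pd (\<lambda>y. Gb f GF y (Inr A) (Inr B) (Inl ())) (Inl ()) p
      = (if A = B then (f2 t * f t - f1 t * f1 t) / (f t * f t) else 0)"
  proof (cases "A = B")
    case True
    have "((\<lambda>s. f1 s / f s - 1) has_real_derivative (f2 t * f t - f1 t * f1 t) / (f t * f t)) (at t)"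
      using f_deriv[OF tI] f1_deriv[OF tI] fnz
      by (auto intro!: derivative_eq_intros simp: power2_eq_square)
    from pd_tfun_t1[of "\<lambda>s. f1 s / f s - 1", OF this[unfolded t_def]] True
    show ?thesis by (simp add: Gb_simps t_def)
  next
    case False
    then show ?thesis by (simp add: Gb_simps pd_const)
  qed
  have "((\<lambda>s. f s * f1 s - f s ^ 2) has_real_derivative (f1 t * f1 t + f t * f2 t - 2 * f t * f1 t)) (at t)"
    using f_deriv[OF tI] f1_deriv[OF tI]
    by (auto intro!: derivative_eq_intros simp: power2_eq_square)
  from pd_tfun_t[of "\<lambda>s. f s * f1 s - f s ^ 2", OF this[unfolded t_def], of "\<lambda>z. GF z $ I' $ K"]
  show "pd (\<lambda>y. Gb f GF y (Inl ()) (Inr I') (Inr K)) (Inl ()) p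
      = (f1 t * f1 t + f t * f2 t - 2 * f t * f1 t) * GF x $ I' $ K"
    by (simp add: Gb_simps t_def x_def)
  show "pd (\<lambda>y. Gb f GF y (Inr A) (Inr B) (Inr K)) (Inr I') p = pd (\<lambda>z. christoffel GF z A B K) I' x"
    using pd_xfun_x[of "\<lambda>z. christoffel GF z A B K"] by (simp add: Gb_simps x_def)
  show "pd (\<lambda>y. Gb f GF y (Inr A) (Inr B) (Inr K)) (Inl ()) p = 0"
    using pd_xfun_t[of "\<lambda>z. christoffel GF z A B K"] by (simp add: Gb_simps)
  show "pd (\<lambda>y. Gb f GF y (Inr A) (Inl ()) (Inr K)) (Inr I') p = 0"
    using pd_tfun_x[of "\<lambda>s. if A = K then f1 s / f s else 0"] by (simp add: Gb_simps)
  show "pd (\<lambda>y. Gb f GF y (Inr A) (Inr B) (Inl ())) (Inr I') p = 0"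
    using pd_tfun_x[of "\<lambda>s. if A = B then f1 s / f s - 1 else 0"] by (simp add: Gb_simps)
  show "pd (\<lambda>y. Gb f GF y (Inl ()) (Inl ()) c) d p = 0"
    using sum_cases[of c] by (auto simp: Gb_simps pd_const)
  show "pd (\<lambda>y. Gb f GF y (Inl ()) (Inr B) (Inl ())) d p = 0"
    by (simp add: Gb_simps pd_const)
  show "pd (\<lambda>y. Gb f GF y (Inr A) (Inl ()) (Inl ())) d p = 0"
    by (simp add: Gb_simps pd_const)
qed

end



lemma ifm1: "(if c then a else 0) * (b::real) = (if c then a * b else 0)" by simp
lemma ifm2: "(b::real) * (if c then a else 0) = (if c then b * a else 0)" by simp

context wp begin

lemma ric_TT:
  assumes p: "p \<in> D"
  defines "t \<equiv> tcoord p"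
  shows "(\<Sum>a\<in>UNIV. curv (Gb f GF) p a (Inl ()) a (Inl ())) = real CARD('n) * ((f2 t - f1 t) / f t)"
proof -
  have fnz: "f t \<noteq> 0" using fpos'[OF p] by (simp add: t_def)
  have "curv (Gb f GF) p (Inr A) (Inl ()) (Inr A) (Inl ()) = (f2 t - f1 t) / f t" for A
  proof -
    have "curv (Gb f GF) p (Inr A) (Inl ()) (Inr A) (Inl ()) =
       (f2 t * f t - f1 t * f1 t) / (f t * f t) + (f1 t / f t - 1) * (f1 t / f t)"
      unfolding curv_def
      by (simp only: pdGb[OF p] sum_UNIV_plus) (simp add: Gb_simps t_def ifm1 ifm2 sum_subtractf sum.distrib)
    also have "\<dots> = (f2 t - f1 t) / f t" using fnz by (simp add: field_simps)
    finally show ?thesis .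
  qed
  then show ?thesis by (simp add: sum_UNIV_plus curv_same)
qed

lemma ric_TK:
  assumes p: "p \<in> D"
  shows "(\<Sum>a\<in>UNIV. curv (Gb f GF) p a (Inl ()) a (Inr K)) = 0"
proof -
  have "curv (Gb f GF) p (Inr A) (Inl ()) (Inr A) (Inr K) = 0" for A
    unfolding curv_def
    by (simp only: pdGb[OF p] sum_UNIV_plus) (simp add: Gb_simps ifm1 ifm2 sum_subtractf sum.distrib)
  then show ?thesis by (simp add: sum_UNIV_plus curv_same)
qed

lemma ric_KT:
  assumes p: "p \<in> D"
  shows "(\<Sum>a\<in>UNIV. curv (Gb f GF) p a (Inr K) a (Inl ())) = 0"
proof -
  have x: "xcoord p \<in> U" using p by (simp add: D_iff)
  have T: "curv (Gb f GF) p (Inl ()) (Inr K) (Inl ()) (Inl ()) = 0"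
    unfolding curv_def
    by (simp only: pdGb[OF p] sum_UNIV_plus) (simp add: Gb_simps)
  have A: "curv (Gb f GF) p (Inr A) (Inr K) (Inr A) (Inl ()) =
      (deriv f (tcoord p) / f (tcoord p) - 1) *
       (christoffel GF (xcoord p) A K A - christoffel GF (xcoord p) A A K)" for A
    unfolding curv_def
    by (simp only: pdGb[OF p] sum_UNIV_plus) (simp add: Gb_simps ifm1 ifm2 sum_subtractf algebra_simps)
  have "(\<Sum>A\<in>UNIV. christoffel GF (xcoord p) A K A - christoffel GF (xcoord p) A A K) = 0"
    using chr_sym[OF x] by simp
  then show ?thesis by (simp add: sum_UNIV_plus T A sum_distrib_left[symmetric])
qed

lemma ric_IK:
  assumes p: "p \<in> D"
  defines "t \<equiv> tcoord p" and "x \<equiv> xcoord p"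
  shows "(\<Sum>a\<in>UNIV. curv (Gb f GF) p a (Inr I') a (Inr K)) =
     (\<Sum>A\<in>UNIV. curv (christoffel GF) x A I' A K) +
     (f1 t / f t * (f t * f1 t - f t ^ 2) - (f1 t * f1 t + f t * f2 t - 2 * f t * f1 t)
      + (1 - real CARD('n)) * (f t * f1 t - f t ^ 2) * (f1 t / f t - 1)) * GF x $ I' $ K"
proof -
  let ?c = "f t * f1 t - f t ^ 2" and ?b = "f1 t / f t - 1"
  have fnz: "f t \<noteq> 0" using fpos'[OF p] by (simp add: t_def)
  have T: "curv (Gb f GF) p (Inl ()) (Inr I') (Inl ()) (Inr K) =
     f1 t / f t * ?c * GF x $ I' $ K - (f1 t * f1 t + f t * f2 t - 2 * f t * f1 t) * GF x $ I' $ K"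
    unfolding curv_def
    by (simp only: pdGb[OF p] sum_UNIV_plus)
       (simp add: Gb_simps t_def x_def ifm1 ifm2 sum_subtractf sum.distrib field_simps fnz power2_eq_square)
  have A: "curv (Gb f GF) p (Inr A) (Inr I') (Inr A) (Inr K) =
     curv (christoffel GF) x A I' A K + ?c * GF x $ A $ K * (if A = I' then ?b else 0)
      - ?c * GF x $ I' $ K * ?b" for A
    unfolding curv_def
    by (simp only: pdGb[OF p] sum_UNIV_plus)
       (simp add: Gb_simps t_def x_def algebra_simps)
  have S: "(\<Sum>A\<in>UNIV. curv (Gb f GF) p (Inr A) (Inr I') (Inr A) (Inr K)) =
     (\<Sum>A\<in>UNIV. curv (christoffel GF) x A I' A K) + ?c * GF x $ I' $ K * ?b
      - real CARD('n) * (?c * GF x $ I' $ K * ?b)"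
    by (simp add: A sum.distrib sum_subtractf ifm1 ifm2 sum_subtractf sum.distrib)
  show ?thesis by (simp only: sum_UNIV_plus T S) (simp add: field_simps fnz power2_eq_square)
qed

end



context wp begin


lemma blocks:
  assumes p: "p \<in> D"
  defines "t \<equiv> tcoord p" and "x \<equiv> xcoord p"
  shows "ricci G (ssm_coeff G dt_field) p (Inl ()) (Inl ()) = real CARD('n) * ((f2 t - f1 t) / f t)"
    "ricci G (ssm_coeff G dt_field) p (Inl ()) (Inr K) = 0"
    "ricci G (ssm_coeff G dt_field) p (Inr K) (Inl ()) = 0"
    "ricci G (ssm_coeff G dt_field) p (Inr I') (Inr K) = ricci GF (christoffel GF) x I' K
        - (f t * (f2 t - f1 t) + (real CARD('n) - 1) * (f1 t - f t)^2) * GF x $ I' $ K"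
proof -
  have xU: "x \<in> U" using p by (simp add: D_iff x_def)
  have fnz: "f t \<noteq> 0" using fpos'[OF p] by (simp add: t_def)
  show "ricci G (ssm_coeff G dt_field) p (Inl ()) (Inl ()) = real CARD('n) * ((f2 t - f1 t) / f t)"
    using ric_TT[OF p] by (simp add: ricci_wp[OF p] t_def)
  show "ricci G (ssm_coeff G dt_field) p (Inl ()) (Inr K) = 0"
    using ric_TK[OF p] by (simp add: ricci_wp[OF p])
  show "ricci G (ssm_coeff G dt_field) p (Inr K) (Inl ()) = 0"
    using ric_KT[OF p] by (simp add: ricci_wp[OF p])
  show "ricci G (ssm_coeff G dt_field) p (Inr I') (Inr K) = ricci GF (christoffel GF) x I' K
        - (f t * (f2 t - f1 t) + (real CARD('n) - 1) * (f1 t - f t)^2) * GF x $ I' $ K"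
    unfolding ricci_wp[OF p] ric_IK[OF p] ricci_F[OF xU] t_def[symmetric] x_def[symmetric]
    using fnz by (simp add: field_simps power2_eq_square)
qed

lemma mkpt_D: "t \<in> I \<Longrightarrow> x \<in> U \<Longrightarrow> mkpt t x \<in> D"
  by (simp add: D_iff)

lemma ev_I: "t \<in> I \<Longrightarrow> eventually (\<lambda>s. s \<in> I) (nhds t)"
  using openI by (simp add: eventually_nhds) blast

lemma main:
  assumes Ine: "I \<noteq> {}" and Une: "U \<noteq> {}" and ivl: "is_interval I"
    and card: "CARD('n) > 1"
    and hpos: "\<forall>x\<in>U. \<forall>i. GF x $ i $ i > 0"
  shows "einstein D G (ssm_coeff G dt_field) lam
         \<longleftrightarrow> lam = 0 \<and>
           (\<exists>c1 c2. (\<forall>t\<in>I. f t = c1 * exp t + c2) \<and>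
              einstein U GF (christoffel GF) (real (CARD('n) - 1) * c2^2))"
proof -
  have lr: "real (CARD('n) - 1) = real CARD('n) - 1" using card by (simp add: of_nat_diff)
  have lpos: "real CARD('n) > 1" using card by simp
  show ?thesis
  proof
    assume E: "einstein D G (ssm_coeff G dt_field) lam"
    obtain x0 where x0: "x0 \<in> U" using Une by blast
    have tt: "f2 t - f1 t = - lam * f t / real CARD('n)" if t: "t \<in> I" for t
    proof -
      have p: "mkpt t x0 \<in> D" by (rule mkpt_D[OF t x0])
      have "real CARD('n) * ((f2 t - f1 t) / f t) = - lam"
        using E p blocks(1)[OF p] unfolding einstein_def by (simp add: wp_metric_def)
      moreover have "f t > 0" using fpos t by blast
      ultimately show ?thesis using lpos by (simp add: field_simps)
    qed
    have ik: "ricci GF (christoffel GF) x i k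
       = (lam * f t ^ 2 + f t * (f2 t - f1 t) + (real CARD('n) - 1) * (f1 t - f t)^2) * GF x $ i $ k"
      if t: "t \<in> I" and x: "x \<in> U" for t x i k
    proof -
      have p: "mkpt t x \<in> D" by (rule mkpt_D[OF t x])
      have "ricci GF (christoffel GF) x i k
        - (f t * (f2 t - f1 t) + (real CARD('n) - 1) * (f1 t - f t)^2) * GF x $ i $ k = lam * (f t ^ 2 * GF x $ i $ k)"
        using E p blocks(4)[OF p, of i k] unfolding einstein_def by simp
      then show ?thesis by (simp add: algebra_simps)
    qed
    define Q where "Q t = lam * (1 - 1 / real CARD('n)) * f t ^ 2 + (real CARD('n) - 1) * (f1 t - f t)^2" for t
    obtain i0 :: 'n where True by blast
    have hx0: "GF x0 $ i0 $ i0 > 0" using hpos x0 by blast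
    define C where "C = ricci GF (christoffel GF) x0 i0 i0 / GF x0 $ i0 $ i0"
    have QC: "Q t = C" if t: "t \<in> I" for t
    proof -
      have e: "f t * (f2 t - f1 t) = - lam * f t ^ 2 / real CARD('n)"
        using tt[OF t] by (simp add: power2_eq_square)
      have "lam * f t ^ 2 + f t * (f2 t - f1 t) + (real CARD('n) - 1) * (f1 t - f t)^2 = Q t"
        unfolding e Q_def using lpos by (simp add: field_simps)
      then have "ricci GF (christoffel GF) x0 i0 i0 = Q t * GF x0 $ i0 $ i0"
        unfolding ik[OF t x0] by simp
      then show ?thesis unfolding C_def using hx0 by simp
    qed
    obtain t0 where t0: "t0 \<in> I" using Ine by blast
    have lam0: "lam = 0"
    proof -
      have d: "(Q has_real_derivative
          lam * (1 - 1 / real CARD('n)) * (2 * f t0 * f1 t0) + (real CARD('n) - 1) * (2 * (f1 t0 - f t0) * (f2 t0 - f1 t0))) (at t0)"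
        unfolding Q_def[abs_def] using f_deriv[OF t0] f1_deriv[OF t0]
        by (auto intro!: derivative_eq_intros simp: power2_eq_square)
      have "(Q has_real_derivative 0) (at t0)"
      proof -
        have "((\<lambda>s. C) has_real_derivative 0) (at t0)" by simp
        moreover have "eventually (\<lambda>s. Q s = C) (nhds t0)"
          using ev_I[OF t0] by (auto elim: eventually_mono simp: QC)
        ultimately show ?thesis using DERIV_cong_ev[of t0 t0 Q "\<lambda>s. C" 0 0] by simp
      qed
      with d have z: "lam * (1 - 1 / real CARD('n)) * (2 * f t0 * f1 t0) + (real CARD('n) - 1) * (2 * (f1 t0 - f t0) * (f2 t0 - f1 t0)) = 0"
        using DERIV_unique by blast
      have "lam * (1 - 1 / real CARD('n)) * (2 * f t0 * f1 t0) + (real CARD('n) - 1) * (2 * (f1 t0 - f t0) * (f2 t0 - f1 t0))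
            = 2 * (real CARD('n) - 1) / real CARD('n) * lam * f t0 ^ 2"
        unfolding tt[OF t0] using lpos by (simp add: field_simps power2_eq_square)
      with z have "(real CARD('n) - 1) / real CARD('n) * lam * f t0 ^ 2 = 0" by simp
      moreover have "f t0 > 0" using fpos t0 by blast
      ultimately show ?thesis using lpos by simp
    qed
    have f21: "f2 t = f1 t" if "t \<in> I" for t using tt[OF that] lam0 by simp
    have conn: "connected I" using ivl by (simp add: is_interval_connected)
    obtain c1 where c1: "\<And>t. t \<in> I \<Longrightarrow> f1 t * exp (- t) = c1"
    proof (rule DERIV_zero_connected_constant[OF conn openI finite.emptyI])
      have d: "((\<lambda>s. f1 s * exp (- s)) has_real_derivative 0) (at t)" if t: "t \<in> I" for t
      proof -
        have "((\<lambda>s. f1 s * exp (- s)) has_real_derivative f2 t * exp (- t) + f1 t * (exp (- t) * (- 1))) (at t)"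
          using f1_deriv[OF t] by (auto intro!: derivative_eq_intros)
        then show ?thesis using f21[OF t] by simp
      qed
      show "continuous_on I (\<lambda>s. f1 s * exp (- s))"
        using d DERIV_isCont continuous_at_imp_continuous_on by blast
      show "\<forall>x\<in>I - {}. ((\<lambda>s. f1 s * exp (- s)) has_real_derivative 0) (at x)" using d by blast
    qed blast
    have f1e: "f1 t = c1 * exp t" if "t \<in> I" for t
      using c1[OF that] by (simp add: exp_minus field_simps)
    obtain c2 where c2: "\<And>t. t \<in> I \<Longrightarrow> f t - c1 * exp t = c2"
    proof (rule DERIV_zero_connected_constant[OF conn openI finite.emptyI])
      have d: "((\<lambda>s. f s - c1 * exp s) has_real_derivative 0) (at t)" if t: "t \<in> I" for t
      proof -
        have "((\<lambda>s. f s - c1 * exp s) has_real_derivative f1 t - c1 * exp t) (at t)"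
          using f_deriv[OF t] by (auto intro!: derivative_eq_intros)
        then show ?thesis using f1e[OF t] by simp
      qed
      show "continuous_on I (\<lambda>s. f s - c1 * exp s)"
        using d DERIV_isCont continuous_at_imp_continuous_on by blast
      show "\<forall>x\<in>I - {}. ((\<lambda>s. f s - c1 * exp s) has_real_derivative 0) (at x)" using d by blast
    qed blast
    have fe: "\<forall>t\<in>I. f t = c1 * exp t + c2" using c2 by (simp add: algebra_simps)
    have "einstein U GF (christoffel GF) (real (CARD('n) - 1) * c2^2)"
      unfolding einstein_def
    proof (intro ballI allI)
      fix x i k assume x: "x \<in> U"
      have "ricci GF (christoffel GF) x i k = ((real CARD('n) - 1) * (f1 t0 - f t0)^2) * GF x $ i $ k"
        using ik[OF t0 x, of i k] lam0 f21[OF t0] by simp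
      also have "f1 t0 - f t0 = - c2" using f1e[OF t0] c2[OF t0] by simp
      finally show "ricci GF (christoffel GF) x i k = real (CARD('n) - 1) * c2^2 * GF x $ i $ k"
        by (simp add: lr)
    qed
    with lam0 fe show "lam = 0 \<and> (\<exists>c1 c2. (\<forall>t\<in>I. f t = c1 * exp t + c2) \<and>
              einstein U GF (christoffel GF) (real (CARD('n) - 1) * c2^2))" by blast
  next
    assume R: "lam = 0 \<and> (\<exists>c1 c2. (\<forall>t\<in>I. f t = c1 * exp t + c2) \<and>
              einstein U GF (christoffel GF) (real (CARD('n) - 1) * c2^2))"
    then obtain c1 c2 where lam0: "lam = 0" and fe: "\<forall>t\<in>I. f t = c1 * exp t + c2"
      and EF: "einstein U GF (christoffel GF) (real (CARD('n) - 1) * c2^2)" by blast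
    have f1e: "f1 t = c1 * exp t" if t: "t \<in> I" for t
    proof -
      have "((\<lambda>s. c1 * exp s + c2) has_real_derivative c1 * exp t) (at t)"
        by (auto intro!: derivative_eq_intros)
      moreover have "eventually (\<lambda>s. f s = c1 * exp s + c2) (nhds t)"
        using ev_I[OF t] fe by (auto elim: eventually_mono)
      ultimately have "(f has_real_derivative c1 * exp t) (at t)"
        using DERIV_cong_ev[of t t f "\<lambda>s. c1 * exp s + c2"] by simp
      then show ?thesis by (rule DERIV_imp_deriv)
    qed
    have f2e: "f2 t = c1 * exp t" if t: "t \<in> I" for t
    proof -
      have "((\<lambda>s. c1 * exp s) has_real_derivative c1 * exp t) (at t)"
        by (auto intro!: derivative_eq_intros)
      moreover have "eventually (\<lambda>s. f1 s = c1 * exp s) (nhds t)"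
        using ev_I[OF t] f1e by (auto elim: eventually_mono)
      ultimately have "(f1 has_real_derivative c1 * exp t) (at t)"
        using DERIV_cong_ev[of t t f1 "\<lambda>s. c1 * exp s"] by simp
      then show ?thesis by (rule DERIV_imp_deriv)
    qed
    show "einstein D G (ssm_coeff G dt_field) lam"
      unfolding einstein_def
    proof (intro ballI allI)
      fix p i k assume p: "p \<in> D"
      have t: "tcoord p \<in> I" and x: "xcoord p \<in> U" using p by (simp_all add: D_iff)
      have d: "f1 (tcoord p) - f (tcoord p) = - c2" using f1e[OF t] fe t by simp
      have e: "f2 (tcoord p) - f1 (tcoord p) = 0" using f1e[OF t] f2e[OF t] by simp
      have rF: "ricci GF (christoffel GF) (xcoord p) i' k' = (real CARD('n) - 1) * c2^2 * GF (xcoord p) $ i' $ k'" for i' k'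
        using EF x unfolding einstein_def lr by blast
      show "ricci G (ssm_coeff G dt_field) p i k = lam * G p $ i $ k"
        using sum_cases[of i] sum_cases[of k]
        by (elim disjE exE) (simp_all add: blocks[OF p] lam0 d e rF)
    qed
  qed
qed

end


lemma diag_pos:
  fixes GF :: "real^'n::finite \<Rightarrow> real^'n^'n" and i :: 'n
  assumes "riem_metric U GF" "x \<in> U"
  shows "GF x $ i $ i > 0"
proof -
  have "axis i 1 \<noteq> (0::real^'n)" by (simp add: axis_eq_0_iff)
  then have "axis i 1 \<bullet> (GF x *v axis i (1::real)) > 0"
    using assms unfolding riem_metric_def by blast
  moreover have "axis i 1 \<bullet> (GF x *v axis i (1::real)) = GF x $ i $ i"
    by (simp add: matrix_vector_mult_def axis_def inner_vec_def ifm1 ifm2 sum.delta)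
  ultimately show ?thesis by simp
qed

theorem theorem4p19:
  fixes I :: "real set" and f :: "real \<Rightarrow> real"
    and U :: "(real^'n) set" and GF :: "real^'n \<Rightarrow> real^'n^'n" and lam :: real
  assumes "open I" and "is_interval I" and "I \<noteq> {}"
    and "smooth_on_real I f" and "\<forall>t\<in>I. f t > 0"
    and "U \<noteq> {}" and "riem_metric U GF"
    and "CARD('n) > 1"
  shows "einstein (wp_domain I U) (wp_metric f GF)
           (ssm_coeff (wp_metric f GF) dt_field) lam
         \<longleftrightarrow> lam = 0 \<and>
           (\<exists>c1 c2. (\<forall>t\<in>I. f t = c1 * exp t + c2) \<and>
              einstein U GF (christoffel GF) (real (CARD('n) - 1) * c2^2))"
proof -
  have sr: "semi_riem_metric U GF" using assms(7) by (simp add: riem_metric_def)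
  have fd0: "\<forall>t\<in>I. f differentiable at t"
    using assms(4) unfolding smooth_on_real_def by (metis funpow_0)
  have fd1: "\<forall>t\<in>I. deriv f differentiable at t"
  proof
    fix t assume "t \<in> I"
    then have "((deriv ^^ 1) f) differentiable at t"
      using assms(4) unfolding smooth_on_real_def by blast
    then show "deriv f differentiable at t" by simp
  qed
  have hdiff: "\<forall>x\<in>U. \<forall>i j k. (\<lambda>s. GF (x + s *\<^sub>R axis k 1) $ i $ j) differentiable (at 0)"
  proof (intro ballI allI)
    fix x i j k assume x: "x \<in> U"
    have "smooth_on_coord U (\<lambda>x. GF x $ i $ j)" using sr by (simp add: semi_riem_metric_def)
    then show "(\<lambda>s. GF (x + s *\<^sub>R axis k 1) $ i $ j) differentiable (at 0)"
      using x unfolding smooth_on_coord_def using iter_partials.base by fastforce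
  qed
  interpret wp I f U GF
  proof
    show "open I" by fact
    show "open U" using sr by (simp add: semi_riem_metric_def)
    show "\<forall>t\<in>I. f t > 0" by fact
    show "\<forall>t\<in>I. f differentiable at t" by fact
    show "\<forall>t\<in>I. deriv f differentiable at t" by fact
    show "\<forall>x\<in>U. transpose (GF x) = GF x" using sr by (simp add: semi_riem_metric_def)
    show "\<forall>x\<in>U. invertible (GF x)" using sr by (simp add: semi_riem_metric_def)
    show "\<forall>x\<in>U. \<forall>i j k. (\<lambda>s. GF (x + s *\<^sub>R axis k 1) $ i $ j) differentiable (at 0)" by fact
  qed
  show ?thesis
    using main[OF assms(3) assms(6) assms(2) assms(8)] diag_pos[OF assms(7)] by blast
qed

end
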